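(* Let $G$ be a finite abstract simplicial complex and let $V=\{x\in G : |x|=1\}$. Then, as polynomials in $t$, $$ f_G(t)-1 = \sum_{v \in V} F_{S(v)}(t). $$
   Context: A finite abstract simplicial complex is a finite set of non-empty finite sets closed under taking non-empty subsets. For a complex $H$ of maximal dimension $d$ (maximal $|x|-1$), $f_k(H)$ is the number of elements of $H$ of cardinality $k+1$, and $f_H(t)=1+\sum_{k=0}^{d} f_k(H)\,t^{k+1}$ (so $f_H(t)=1$ for the empty complex); $F_H(t)=\int_0^t f_H(s)\,ds$. For $x\in G$: $U(x)=\{y\in G: x\subset y\}$, $B(x)=\{y\in G : y\subset z \text{ for some } z\in U(x)\}$, and the unit sphere $S(x)=B(x)\setminus U(x)$, which is again a simplicial complex. *)

theory Defs
  imports "HOL-Computational_Algebra.Polynomial"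
begin

definition simplicial_complex :: "'a set set \<Rightarrow> bool" where
  "simplicial_complex G \<longleftrightarrow> finite G \<and>
     (\<forall>x\<in>G. x \<noteq> {} \<and> finite x \<and> (\<forall>y. y \<noteq> {} \<and> y \<subseteq> x \<longrightarrow> y \<in> G))"

definition sc_dim :: "'a set set \<Rightarrow> nat" where
  "sc_dim H = Max ((\<lambda>x. card x - 1) ` H)"

definition fnum :: "'a set set \<Rightarrow> nat \<Rightarrow> nat" where
  "fnum H k = card {x\<in>H. card x = k + 1}"

definition f_poly :: "'a set set \<Rightarrow> real poly" where
  "f_poly H = (if H = {} then 1
     else 1 + (\<Sum>k\<le>sc_dim H. monom (of_nat (fnum H k)) (k + 1)))"

definition poly_integral :: "real poly \<Rightarrow> real poly" where
  "poly_integral p = (\<Sum>i\<le>degree p. monom (coeff p i / of_nat (i + 1)) (i + 1))"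

definition F_poly :: "'a set set \<Rightarrow> real poly" where
  "F_poly H = poly_integral (f_poly H)"

definition U_set :: "'a set set \<Rightarrow> 'a set \<Rightarrow> 'a set set" where
  "U_set G x = {y\<in>G. x \<subseteq> y}"

definition B_set :: "'a set set \<Rightarrow> 'a set \<Rightarrow> 'a set set" where
  "B_set G x = {y\<in>G. \<exists>z\<in>U_set G x. y \<subseteq> z}"

definition unit_sphere :: "'a set set \<Rightarrow> 'a set \<Rightarrow> 'a set set" where
  "unit_sphere G x = B_set G x - U_set G x"

end

theory Submission
  imports Defs
begin

lemma coeff_poly_integral:
  "coeff (poly_integral p) n = (if n = 0 then 0 else coeff p (n-1) / of_nat n)"
proof -
  have "coeff (poly_integral p) n = (\<Sum>i\<le>degree p. if n = i+1 then coeff p i / of_nat (i+1) else 0)"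
    unfolding poly_integral_def coeff_sum coeff_monom by (intro sum.cong) auto
  also have "\<dots> = (if n = 0 then 0 else coeff p (n-1) / of_nat n)"
  proof (cases "n = 0")
    case False
    show ?thesis
    proof (cases "n - 1 \<le> degree p")
      case True
      then show ?thesis using False
      proof -
        have "(\<Sum>i\<le>degree p. if n = i+1 then coeff p i / of_nat (i+1) else 0)
            = (\<Sum>i\<le>degree p. if i = n - 1 then coeff p (n-1) / of_nat n else 0)"
          using False by (intro sum.cong) auto
        also have "\<dots> = coeff p (n-1) / of_nat n" using True by (simp add: sum.delta')
        finally show ?thesis using False by simp
      qed
    next
      case f2: False
      then have "coeff p (n-1) = 0" by (simp add: coeff_eq_0)
      then show ?thesis using False f2 by (auto intro!: sum.neutral)
    qed
  qed simp
  finally show ?thesis .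
qed

lemma poly_integral_add: "poly_integral (p + q) = poly_integral p + poly_integral q"
  by (rule poly_eqI) (simp add: coeff_poly_integral add_divide_distrib)

lemma poly_integral_sum: "finite A \<Longrightarrow> poly_integral (\<Sum>x\<in>A. f x) = (\<Sum>x\<in>A. poly_integral (f x))"
  by (induction A rule: finite_induct) (auto simp: poly_integral_add poly_eqI coeff_poly_integral)

lemma poly_integral_monom: "poly_integral (monom c n) = monom (c / of_nat (n+1)) (n+1)"
  by (rule poly_eqI) (auto simp: coeff_poly_integral coeff_monom)

lemma poly_integral_1: "poly_integral 1 = monom 1 1"
  using poly_integral_monom[of 1 0] by (simp add: one_poly_def monom_0[symmetric] del: monom_0)

lemma of_nat_monom1: "(of_nat c :: real poly) * monom 1 k = monom (of_nat c) k"
  by (induction c) (simp_all add: distrib_right add_monom)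

lemma of_nat_monom2: "(of_nat c :: real poly) * monom a k = monom (of_nat c * a) k"
  by (induction c) (simp_all add: distrib_right add_monom)

lemma f_poly_sum:
  assumes "finite H" "\<And>x. x \<in> H \<Longrightarrow> finite x \<and> x \<noteq> {}"
  shows "f_poly H = 1 + (\<Sum>x\<in>H. monom 1 (card x))"
proof (cases "H = {}")
  case False
  have "(\<Sum>k\<le>sc_dim H. monom (of_nat (fnum H k)) (k + 1) :: real poly)
      = (\<Sum>k\<le>sc_dim H. \<Sum>x\<in>{x\<in>H. card x = k + 1}. monom 1 (card x))"
    unfolding fnum_def
  proof (intro sum.cong refl)
    fix k
    have "(\<Sum>x\<in>{x\<in>H. card x = k + 1}. monom 1 (card x) :: real poly) = (\<Sum>x\<in>{x\<in>H. card x = k + 1}. monom 1 (k+1))"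
      by (rule sum.cong) auto
    also have "\<dots> = monom (of_nat (card {x\<in>H. card x = k + 1})) (k+1)"
      by (simp add: of_nat_monom1)
    finally show "monom (of_nat (card {x\<in>H. card x = k + 1})) (k + 1) = (\<Sum>x\<in>{x\<in>H. card x = k + 1}. monom 1 (card x) :: real poly)" by simp
  qed
  also have "\<dots> = (\<Sum>x\<in>H. monom 1 (card x))"
  proof -
    have "(\<Sum>x\<in>H. monom 1 (card x) :: real poly) = (\<Sum>k\<in>(\<lambda>x. card x - 1) ` H. \<Sum>x\<in>{x\<in>H. card x - 1 = k}. monom 1 (card x))"
      by (rule sum.image_gen) (use assms in auto)
    also have "\<dots> = (\<Sum>k\<le>sc_dim H. \<Sum>x\<in>{x\<in>H. card x - 1 = k}. monom 1 (card x))"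
      apply (rule sum.mono_neutral_left)
      using assms False by (auto simp: sc_dim_def intro!: sum.neutral)
    also have "\<dots> = (\<Sum>k\<le>sc_dim H. \<Sum>x\<in>{x\<in>H. card x = k + 1}. monom 1 (card x))"
    proof -
      have eq: "{x\<in>H. card x - 1 = k} = {x\<in>H. card x = k + 1}" for k
        using assms(2) by (fastforce simp: card_gt_0_iff)
      show ?thesis by (simp only: eq)
    qed
    finally show ?thesis by simp
  qed
  finally show ?thesis using False by (simp add: f_poly_def)
qed (simp add: f_poly_def)

theorem mainTheorem8:
  fixes G :: "'a set set"
  assumes "simplicial_complex G"
  shows "f_poly G - 1 = (\<Sum>v\<in>{x\<in>G. card x = 1}. F_poly (unit_sphere G v))"
proof -
  have finG: "finite G" and elG: "\<And>x. x \<in> G \<Longrightarrow> x \<noteq> {} \<and> finite x"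
    and closed: "\<And>x y. x \<in> G \<Longrightarrow> y \<noteq> {} \<Longrightarrow> y \<subseteq> x \<Longrightarrow> y \<in> G"
    using assms unfolding simplicial_complex_def by blast+
  define V where "V = {x\<in>G. card x = 1}"
  define G2 where "G2 = {x\<in>G. card x \<ge> 2}"
  define S where "S = unit_sphere G"
  define g :: "'a set \<Rightarrow> real poly" where "g y = monom (1 / of_nat (card y + 1)) (card y + 1)" for y
  have SsubG: "S v \<subseteq> G" for v unfolding S_def unit_sphere_def B_set_def by auto
  have finS: "finite (S v)" for v using SsubG finG finite_subset by blast
  have finV: "finite V" using finG V_def by simp
  have FS: "F_poly (S v) = monom 1 1 + (\<Sum>y\<in>S v. g y)" for v
  proof -
    have "f_poly (S v) = 1 + (\<Sum>x\<in>S v. monom 1 (card x))"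
      using f_poly_sum[OF finS] SsubG elG by blast
    then show ?thesis
      by (simp add: F_poly_def poly_integral_add poly_integral_sum[OF finS] poly_integral_1
          poly_integral_monom g_def)
  qed
  have memS: "y \<in> S {a} \<longleftrightarrow> y \<in> G \<and> a \<notin> y \<and> insert a y \<in> G" for a y
  proof
    assume "y \<in> S {a}"
    then obtain z where "y \<in> G" "z \<in> G" "a \<in> z" "y \<subseteq> z" "\<not> {a} \<subseteq> y"
      unfolding S_def unit_sphere_def B_set_def U_set_def by auto
    then show "y \<in> G \<and> a \<notin> y \<and> insert a y \<in> G" using closed[of z "insert a y"] by auto
  next
    assume "y \<in> G \<and> a \<notin> y \<and> insert a y \<in> G"
    then show "y \<in> S {a}"
      unfolding S_def unit_sphere_def B_set_def U_set_def by auto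
  qed
  have Vchar: "v \<in> V \<longleftrightarrow> (\<exists>a. v = {a} \<and> {a} \<in> G)" for v
    unfolding V_def by (auto simp: card_1_singleton_iff)
  have key: "(\<Sum>v\<in>V. \<Sum>y\<in>S v. g y) = (\<Sum>x\<in>G2. monom 1 (card x))"
  proof -
    have "(\<Sum>v\<in>V. \<Sum>y\<in>S v. g y) = (\<Sum>(v,y)\<in>Sigma V S. g y)"
      by (rule sum.Sigma[OF finV]) (use finS in auto)
    also have "\<dots> = (\<Sum>(x,a)\<in>Sigma G2 (\<lambda>x. x). g (x - {a}))"
    proof (rule sum.reindex_bij_witness[symmetric, where i="\<lambda>(v,y). (y \<union> v, the_elem v)"
          and j="\<lambda>(x,a). ({a}, x - {a})"])
      fix p assume p: "p \<in> Sigma G2 (\<lambda>x. x)"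
      then obtain x a where xa: "p = (x,a)" "x \<in> G" "card x \<ge> 2" "a \<in> x" unfolding G2_def by auto
      then show "(case case p of (x, a) \<Rightarrow> ({a}, x - {a}) of (v, y) \<Rightarrow> (y \<union> v, the_elem v)) = p"
        by auto
      have fx: "finite x" using elG xa by auto
      have "card (x - {a}) = card x - 1" using xa fx by simp
      then have "card (x - {a}) \<ge> 1" using xa by linarith
      then have "x - {a} \<noteq> {}" by (metis card.empty not_one_le_zero)
      then have "x - {a} \<in> G" using closed[OF xa(2)] by auto
      moreover have "{a} \<in> G" using closed[OF xa(2)] xa by auto
      ultimately show "(case p of (x, a) \<Rightarrow> ({a}, x - {a})) \<in> Sigma V S"
        using xa memS Vchar by (auto simp: insert_absorb)
      show "(case case p of (x, a) \<Rightarrow> ({a}, x - {a}) of (v, y) \<Rightarrow> g y) = (case p of (x, a) \<Rightarrow> g (x - {a}))"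
        using xa by auto
    next
      fix p assume p: "p \<in> Sigma V S"
      then obtain a y where ay: "p = ({a}, y)" "{a} \<in> G" "y \<in> G" "a \<notin> y" "insert a y \<in> G"
        using Vchar memS by auto
      then show "(case case p of (v, y) \<Rightarrow> (y \<union> v, the_elem v) of (x, a) \<Rightarrow> ({a}, x - {a})) = p"
        by auto
      have "finite y" "y \<noteq> {}" using elG ay by auto
      then have "card (insert a y) \<ge> 2" using ay
        by (simp add: card_gt_0_iff Suc_le_eq)
      then show "(case p of (v, y) \<Rightarrow> (y \<union> v, the_elem v)) \<in> Sigma G2 (\<lambda>x. x)"
        using ay by (auto simp: G2_def)
    qed
    also have "\<dots> = (\<Sum>x\<in>G2. \<Sum>a\<in>x. g (x - {a}))"
      by (rule sum.Sigma[symmetric]) (use finG elG in \<open>auto simp: G2_def\<close>)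
    also have "\<dots> = (\<Sum>x\<in>G2. monom 1 (card x))"
    proof (rule sum.cong[OF refl])
      fix x assume x: "x \<in> G2"
      then have fx: "finite x" and cx: "card x \<ge> 2" using elG G2_def by auto
      have "(\<Sum>a\<in>x. g (x - {a})) = (\<Sum>a\<in>x. monom (1 / of_nat (card x)) (card x))"
        by (rule sum.cong[OF refl]) (use fx cx in \<open>simp add: g_def\<close>)
      also have "\<dots> = of_nat (card x) * monom (1 / of_nat (card x)) (card x)" by simp
      also have "\<dots> = monom 1 (card x)"
        using cx by (simp add: of_nat_monom2)
      finally show "(\<Sum>a\<in>x. g (x - {a})) = monom 1 (card x)" .
    qed
    finally show ?thesis .
  qed
  have "f_poly G - 1 = (\<Sum>x\<in>G. monom 1 (card x))"
    using f_poly_sum[OF finG] elG by simp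
  also have "\<dots> = (\<Sum>x\<in>V. monom 1 (card x)) + (\<Sum>x\<in>G2. monom 1 (card x))"
  proof -
    have "G = V \<union> G2" "V \<inter> G2 = {}"
    proof -
      have "card x \<ge> 1" if "x \<in> G" for x using elG[OF that] by (simp add: Suc_le_eq card_gt_0_iff)
      then show "G = V \<union> G2" "V \<inter> G2 = {}" by (fastforce simp: V_def G2_def)+
    qed
    then show ?thesis using finG by (metis finite_Un sum.union_disjoint)
  qed
  also have "\<dots> = (\<Sum>v\<in>V. F_poly (S v))"
  proof -
    have "(\<Sum>x\<in>V. monom 1 (card x) :: real poly) = (\<Sum>x\<in>V. monom 1 1)"
      by (rule sum.cong) (auto simp: V_def)
    then show ?thesis by (simp add: FS sum.distrib key)
  qed
  finally show ?thesis by (simp add: V_def S_def)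
qed

end
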